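(* Assume (A1) and (A2), and set $\tilde\eta=2\eta\|\mathbf{u}\|_2^2/m$. Let $k\ge1$ with $\bar T_k<\infty$, and suppose $E_{\bar T_k-1}:=\frac1m\sum_{r\in[m]}\big[\sigma(-\langle\mathbf{w}^{(\bar T_k-1)}_{-y,r},-y\mathbf{u}\rangle)+\sigma(-\langle\mathbf{w}^{(\bar T_k-1)}_{-y,r},-y\mathbf{v}\rangle)\big]<\delta/2$. Then $$yf(\mathbf{x};\mathbf{W}^{(\bar T_k-1)})\ge\frac{2+\tilde\eta-\sqrt{\tilde\eta^2+4\tilde\eta}}{2\tilde\eta},$$ and $$yf(\mathbf{x};\mathbf{W}^{(\bar T_k)})\le yf(\mathbf{x};\mathbf{W}^{(\bar T_k-1)})\Big(1+\tilde\eta\big(1-yf(\mathbf{x};\mathbf{W}^{(\bar T_k-1)})\big)\Big)^2+2E_{\bar T_k-1}.$$ (This holds regardless of whether $\bar T_k$ is before or after $T_{(\mathbf{v})}$.)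
   Context: Single-data setting: $\mathbf{u},\mathbf{v}\in\mathbb{R}^d$ are fixed nonzero vectors with $\langle\mathbf{u},\mathbf{v}\rangle=0$, $y\in\{\pm1\}$, and the single training example is $(\mathbf{x},y)$ with $\mathbf{x}=(y\mathbf{u},y\mathbf{v})$. Let $\sigma(z)=(\max\{z,0\})^2$ (so $\sigma'(z)=2\max\{z,0\}$). Weights $\mathbf{W}=\{\mathbf{w}_{j,r}\}_{j\in\{\pm1\},r\in[m]}\subset\mathbb{R}^d$; network $f(\mathbf{x};\mathbf{W})=\sum_{j\in\{\pm1\}}jF_j(\mathbf{x};\mathbf{W})$ with $F_j(\mathbf{x};\mathbf{W})=\frac1m\sum_{r\in[m]}[\sigma(\langle\mathbf{w}_{j,r},y\mathbf{u}\rangle)+\sigma(\langle\mathbf{w}_{j,r},y\mathbf{v}\rangle)]$; loss $L(\mathbf{W})=\frac12(f(\mathbf{x};\mathbf{W})-y)^2$. All entries of all $\mathbf{w}^{(0)}_{j,r}$ are i.i.d. $N(0,\sigma_0^2)$, and for $t\ge0$: $\mathbf{w}^{(t+1)}_{j,r}=\mathbf{w}^{(t)}_{j,r}-\frac{\eta j}{m}(f(\mathbf{x};\mathbf{W}^{(t)})-y)\big(\sigma'(\langle\mathbf{w}^{(t)}_{j,r},y\mathbf{u}\rangle)y\mathbf{u}+\sigma'(\langle\mathbf{w}^{(t)}_{j,r},y\mathbf{v}\rangle)y\mathbf{v}\big)$ with learning rate $\eta>0$. (A1) Conditions: $m/(4\|\mathbf{u}\|_2^2)\le\eta\le2m/(5\|\mathbf{u}\|_2^2)$;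 $\sigma_0=\tilde\Theta(\max\{\|\mathbf{u}\|_2,\|\mathbf{v}\|_2\}^{-1}d^{-1/2})$; $\|\mathbf{v}\|_2<0.01\|\mathbf{u}\|_2$; $d=\Omega(\mathrm{polylog}(m))$. (A2) Oscillation: there is a constant $\delta\in(0.2,0.8)$ with $|yf(\mathbf{x};\mathbf{W}^{(t)})-1|\ge\delta$ for every $t\ge0$. Up-crossing times: $\bar T_0=0$ and, recursively, $\bar T_k=\min\{t>\bar T_{k-1}:yf(\mathbf{x};\mathbf{W}^{(t)})\ge1\text{ and }yf(\mathbf{x};\mathbf{W}^{(t-1)})<1\}$. $T_{(\mathbf{v})}=\min\{t\ge0:\frac1m\sum_{r}\sigma(\langle\mathbf{w}^{(t)}_{y,r},y\mathbf{v}\rangle)>\delta\}$. *)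

theory Defs
  imports "HOL-Analysis.Analysis"
begin

definition act :: "real \<Rightarrow> real" where
  "act z = (max z 0)^2"

definition act' :: "real \<Rightarrow> real" where
  "act' z = 2 * max z 0"

definition Fnet :: "nat \<Rightarrow> 'a::real_inner \<times> 'a \<Rightarrow> (int \<Rightarrow> nat \<Rightarrow> 'a) \<Rightarrow> int \<Rightarrow> real" where
  "Fnet m x W j = (1 / real m) * (\<Sum>r<m. act (inner (W j r) (fst x)) + act (inner (W j r) (snd x)))"

definition fnet :: "nat \<Rightarrow> 'a::real_inner \<times> 'a \<Rightarrow> (int \<Rightarrow> nat \<Rightarrow> 'a) \<Rightarrow> real" where
  "fnet m x W = (\<Sum>j\<in>{-1, 1::int}. real_of_int j * Fnet m x W j)"

text \<open>One gradient descent step on L(W) = (f(x;W) - y)^2 / 2 as given in the paper.\<close>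
definition gd_step :: "nat \<Rightarrow> real \<Rightarrow> 'a::real_inner \<times> 'a \<Rightarrow> real \<Rightarrow> (int \<Rightarrow> nat \<Rightarrow> 'a) \<Rightarrow> (int \<Rightarrow> nat \<Rightarrow> 'a)" where
  "gd_step m \<eta> x y W = (\<lambda>j r. W j r - (\<eta> * real_of_int j / real m * (fnet m x W - y)) *\<^sub>R
      (act' (inner (W j r) (fst x)) *\<^sub>R fst x + act' (inner (W j r) (snd x)) *\<^sub>R snd x))"

text \<open>Up-crossing times: Tbar g 0 = 0 and Tbar g k = min{t > Tbar g (k-1). g t >= 1 and g (t-1) < 1},
  where g t = y f(x; W^(t)).  None encodes "= infinity".\<close>
fun Tbar :: "(nat \<Rightarrow> real) \<Rightarrow> nat \<Rightarrow> nat option" where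
  "Tbar g 0 = Some 0"
| "Tbar g (Suc k) = (case Tbar g k of
      None \<Rightarrow> None
    | Some s \<Rightarrow> (if \<exists>t. t > s \<and> g t \<ge> 1 \<and> g (t - 1) < 1
                then Some (LEAST t. t > s \<and> g t \<ge> 1 \<and> g (t - 1) < 1) else None))"

end

theory Submission
  imports Defs
begin


lemma act_nonneg: "act a \<ge> 0" by (simp add: act_def)

lemma act_step: assumes "0 \<le> \<kappa>" shows "act (a + \<kappa> * max a 0) = (1+\<kappa>)^2 * act a"
proof (cases "a > 0")
  case True
  have "a + \<kappa> * a > 0" using True assms by (simp add: add_pos_nonneg)
  thus ?thesis using True by (simp add: act_def max_def power2_eq_square algebra_simps)
next
  case False thus ?thesis by (simp add: act_def max_def)
qed

lemma Fnet_nonneg: "Fnet m x W j \<ge> 0"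
  unfolding Fnet_def by (intro mult_nonneg_nonneg sum_nonneg add_nonneg_nonneg act_nonneg) auto

lemma fnet_split: assumes "y \<in> {-1, 1::int}"
  shows "real_of_int y * fnet m x W = Fnet m x W y - Fnet m x W (-y)"
  using assms by (auto simp: fnet_def)

lemma upd_inner:
  fixes u v w :: "'a::real_inner"
  assumes "Y*Y = 1" "inner u v = 0"
  shows "inner (w - (\<eta> * Y / M * (G - Y)) *\<^sub>R (act' (inner w (Y *\<^sub>R u)) *\<^sub>R (Y *\<^sub>R u) + act' (inner w (Y *\<^sub>R v)) *\<^sub>R (Y *\<^sub>R v))) (Y *\<^sub>R u)
     = inner w (Y *\<^sub>R u) + (2*\<eta>*norm u^2/M * (1 - Y*G)) * max (inner w (Y *\<^sub>R u)) 0"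
proof -
  have vu: "inner v u = 0" using assms(2) by (simp add: inner_commute)
  have "inner (w - (\<eta> * Y / M * (G - Y)) *\<^sub>R (act' (inner w (Y *\<^sub>R u)) *\<^sub>R (Y *\<^sub>R u) + act' (inner w (Y *\<^sub>R v)) *\<^sub>R (Y *\<^sub>R v))) (Y *\<^sub>R u)
     = inner w (Y *\<^sub>R u) - (\<eta> * Y / M * (G - Y)) * (act' (inner w (Y *\<^sub>R u)) * (Y*Y) * inner u u)"
    by (simp add: inner_diff_left inner_add_left vu algebra_simps)
  also have "\<dots> = inner w (Y *\<^sub>R u) + (2*\<eta>*norm u^2/M * (1 - Y*G)) * max (inner w (Y *\<^sub>R u)) 0"
  proof -
    have YY: "\<And>K. Y*(Y*K) = K" using assms(1) by (metis mult.assoc mult_1)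
    show ?thesis by (simp add: act'_def power2_norm_eq_inner algebra_simps YY diff_divide_distrib add_divide_distrib)
  qed
  finally show ?thesis .
qed



lemma q_nonpos:
  fixes z E zT h d sg :: real
  assumes "1/2 \<le> h" "h \<le> 4/5" "0 \<le> E" "E < d/2" "d \<le> sg" "sg = 1 - z" "0 < sg"
    "1 + d \<le> zT" "zT \<le> (1+h* sg)^2 * (z+E)"
  shows "h^2*z^2 - h*(h+2)*z + 1 \<le> 0"
proof (rule ccontr)
  assume q: "\<not> ?thesis"
  define c where "c = 1 + h* sg"
  have id: "c^2*z - 1 = (z-1)*(h^2*z^2 - h*(h+2)*z + 1)" unfolding c_def assms(6)
    by (simp add: algebra_simps power2_eq_square)
  have "(z-1)*(h^2*z^2 - h*(h+2)*z + 1) < 0" using q assms(6,7)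
    by (intro mult_neg_pos) auto
  hence cz: "c^2*z < 1" using id by linarith
  have cpos: "c^2 > 0" proof -
    have "h * sg \<ge> 0" using assms by simp
    thus ?thesis unfolding c_def by simp
  qed
  have "1 + d \<le> c^2*z + c^2*E" using assms(8,9) unfolding c_def by (simp add: algebra_simps)
  have cE: "c^2*E \<le> c^2*(d/2)" using cpos assms(4) by simp
  have "d > 0" using assms by linarith
  have c2: "c^2 > 2"
  proof (rule ccontr)
    assume "\<not> c^2 > 2"
    hence "c^2*(d/2) \<le> 2*(d/2)" using \<open>d>0\<close> by (intro mult_right_mono) auto
    thus False using cz cE \<open>1 + d \<le> c^2*z + c^2*E\<close> by linarith
  qed
  have "d*(c^2/2-1) \<le> sg*(c^2/2-1)" using c2 assms(5) by (intro mult_right_mono) auto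
  hence k1: "d*c^2/2 - d \<le> sg*c^2/2 - sg" by (simp add: algebra_simps)
  have k2: "sg*c^2 = c^2 - z*c^2" unfolding assms(6) by (simp add: algebra_simps)
  have k3: "c^2*(1-sg/2) - sg = c^2 - sg*c^2/2 - sg" by (simp add: algebra_simps)
  have key: "1 \<le> c^2*(1-sg/2) - sg" unfolding k3 using k1 k2 \<open>1 + d \<le> c^2*z + c^2*E\<close> cE
    by (simp add: algebra_simps)
  have s5: "sg \<ge> 1/2"
  proof (rule ccontr)
    assume "\<not> sg \<ge> 1/2"
    hence "h * sg \<le> 4/5 * (1/2)" using assms by (intro mult_mono) auto
    moreover have "h * sg \<ge> 0" using assms by simp
    ultimately have "c \<le> 7/5" "c \<ge> 0" unfolding c_def by auto
    hence "c^2 \<le> (7/5)^2" by (intro power_mono) auto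
    thus False using c2 by (simp add: power2_eq_square)
  qed
  show False
  proof (cases "sg \<le> 2")
    case True
    have "c \<le> 1 + 4/5* sg" "0 \<le> c" unfolding c_def using assms(1,2,7) mult_right_mono[of h "4/5" sg] by auto
    hence "c^2 \<le> (1+4/5* sg)^2" by (intro power_mono) auto
    hence "c^2*(1-sg/2) \<le> (1+4/5* sg)^2*(1-sg/2)" using True by (intro mult_right_mono) auto
    moreover have "(1+4/5* sg)^2*(1-sg/2) - 1 - sg = sg*(1/10 - 4/25* sg - 8/25* sg^2)"
      by (simp add: power2_eq_square field_simps)
    moreover have "sg*(1/10 - 4/25* sg - 8/25* sg^2) < 0"
    proof (rule mult_pos_neg)
      show "0 < sg" using assms by simp
      have "(1/2::real)^2 \<le> sg^2" using s5 by (intro power_mono) auto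
      hence "sg^2 \<ge> 1/4" by (simp add: power2_eq_square)
      thus "1/10 - 4/25* sg - 8/25* sg^2 < 0" using s5 by linarith
    qed
    ultimately show False using key by linarith
  next
    case False
    hence "c^2*(1-sg/2) \<le> 0" using cpos by (intro mult_nonneg_nonpos) auto
    thus False using key assms by linarith
  qed
qed

lemma final_arith:
  fixes z E zT h :: real
  assumes "1/2 \<le> h" "h \<le> 4/5" "0 \<le> E" "z < 1"
    "zT \<le> (1+h*(1-z))^2 * (z+E)"
    "h^2*z^2 - h*(h+2)*z + 1 \<le> 0"
  shows "z \<ge> (2 + h - sqrt (h^2 + 4*h)) / (2*h) \<and> zT \<le> z*(1+h*(1-z))^2 + 2*E"
proof
  have hp: "h > 0" using assms by simp
  define R where "R = 2 + h - 2*h*z"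
  have "h*z < h" using hp assms(4) by simp
  hence Rp: "R \<ge> 0" unfolding R_def using assms by linarith
  have "R^2 = h^2 + 4*h + 4*(h^2*z^2 - h*(h+2)*z + 1)" unfolding R_def
    by (simp add: power2_eq_square algebra_simps)
  moreover obtain Q where "Q = h^2*z^2 - h*(h+2)*z + 1" by blast
  ultimately have "R^2 \<le> h^2 + 4*h" using assms(6) by simp
  hence "sqrt (R^2) \<le> sqrt (h^2 + 4*h)" by (rule real_sqrt_le_mono)
  hence "R \<le> sqrt (h^2 + 4*h)" using Rp by simp
  hence "2 + h - sqrt (h^2 + 4*h) \<le> z * (2*h)" unfolding R_def by (simp add: algebra_simps)
  thus "z \<ge> (2 + h - sqrt (h^2 + 4*h)) / (2*h)" using hp by (simp add: divide_le_eq)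
next
  have hp: "h > 0" using assms by simp
  have z12: "z > 1/2"
  proof (rule ccontr)
    assume "\<not> z > 1/2"
    hence zl: "z \<le> 1/2" by simp
    have eq: "h^2*z^2 - h*(h+2)*z + 1 = (1 - h^2/4 - h) + h*(z-1/2)*(h*z - h/2 - 2)"
      by (simp add: power2_eq_square algebra_simps)
    have "h*z \<le> h*(1/2)" using zl hp by (intro mult_left_mono) auto
    hence a1: "h*z - h/2 - 2 \<le> 0" by simp
    have a2: "h*(z-1/2) \<le> 0" using zl hp by (intro mult_nonneg_nonpos) auto
    have P: "h*(z-1/2)*(h*z - h/2 - 2) \<ge> 0" using a2 a1 by (rule mult_nonpos_nonpos)
    have "h^2 \<le> (4/5)^2" using assms hp by (intro power_mono) auto
    hence "h^2 \<le> 16/25" by (simp add: power2_eq_square)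
    thus False using eq assms(2,6) P by linarith
  qed
  define c where "c = 1 + h*(1-z)"
  have "h*(1-z) \<le> 4/5*(1/2)" using z12 assms by (intro mult_mono) auto
  moreover have "h*(1-z) \<ge> 0" using assms hp by simp
  ultimately have "c \<le> 7/5" "0 \<le> c" unfolding c_def by auto
  hence "c^2 \<le> (7/5)^2" by (intro power_mono) auto
  hence c2: "c^2 \<le> 2" by (simp add: power2_eq_square)
  have "c^2*E \<le> 2*E" using c2 assms(3) by (intro mult_right_mono) auto
  thus "zT \<le> z*(1+h*(1-z))^2 + 2*E" using assms(5) unfolding c_def[symmetric]
    by (simp add: algebra_simps)
qed



theorem mainTheorem11:
  fixes u v :: "'a::euclidean_space"
    and y :: int and m :: nat and \<eta> \<delta> :: real
    and W :: "nat \<Rightarrow> int \<Rightarrow> nat \<Rightarrow> 'a"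
    and k T :: nat
  assumes u_nz: "u \<noteq> 0" and v_nz: "v \<noteq> 0" and uv_orth: "inner u v = 0"
    and y_pm: "y \<in> {-1, 1}"
    and m_pos: "m > 0"
    and eta_lo: "real m / (4 * norm u ^ 2) \<le> \<eta>"
    and eta_hi: "\<eta> \<le> 2 * real m / (5 * norm u ^ 2)"
    and v_small: "norm v < 0.01 * norm u"
    and gd: "\<forall>t. W (Suc t) = gd_step m \<eta> (real_of_int y *\<^sub>R u, real_of_int y *\<^sub>R v) (real_of_int y) (W t)"
    and delta_range: "0.2 < \<delta>" "\<delta> < 0.8"
    and osc: "\<forall>t. \<bar>real_of_int y * fnet m (real_of_int y *\<^sub>R u, real_of_int y *\<^sub>R v) (W t) - 1\<bar> \<ge> \<delta>"
    and k_pos: "k \<ge> 1"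
    and Tk: "Tbar (\<lambda>t. real_of_int y * fnet m (real_of_int y *\<^sub>R u, real_of_int y *\<^sub>R v) (W t)) k = Some T"
    and E_small: "(1 / real m) * (\<Sum>r<m. act (- inner (W (T - 1) (-y) r) (- real_of_int y *\<^sub>R u))
                     + act (- inner (W (T - 1) (-y) r) (- real_of_int y *\<^sub>R v))) < \<delta> / 2"
  shows "let \<eta>t = 2 * \<eta> * norm u ^ 2 / real m;
             x = (real_of_int y *\<^sub>R u, real_of_int y *\<^sub>R v);
             z = real_of_int y * fnet m x (W (T - 1));
             E = (1 / real m) * (\<Sum>r<m. act (- inner (W (T - 1) (-y) r) (- real_of_int y *\<^sub>R u))
                     + act (- inner (W (T - 1) (-y) r) (- real_of_int y *\<^sub>R v)))
         in z \<ge> (2 + \<eta>t - sqrt (\<eta>t ^ 2 + 4 * \<eta>t)) / (2 * \<eta>t)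
          \<and> real_of_int y * fnet m x (W T) \<le> z * (1 + \<eta>t * (1 - z)) ^ 2 + 2 * E"

proof -
  define Y where "Y = real_of_int y"
  define x where "x = (Y *\<^sub>R u, Y *\<^sub>R v)"
  define g where "g = (\<lambda>t. Y * fnet m x (W t))"
  have YY: "Y*Y = 1" using y_pm unfolding Y_def by auto
  have Tk': "Tbar g k = Some T" using Tk unfolding g_def x_def Y_def .
  obtain k' where kk: "k = Suc k'" using k_pos by (cases k) auto
  obtain s0 where s0: "Tbar g k' = Some s0"
    using Tk' unfolding kk by (cases "Tbar g k'") auto
  have ex: "\<exists>t. t > s0 \<and> g t \<ge> 1 \<and> g (t - 1) < 1"
    using Tk' unfolding kk by (auto simp: s0 split: if_splits)
  have Teq: "T = (LEAST t. t > s0 \<and> g t \<ge> 1 \<and> g (t - 1) < 1)"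
    using Tk' ex unfolding kk by (simp add: s0)
  have TP: "T > s0 \<and> g T \<ge> 1 \<and> g (T - 1) < 1"
    unfolding Teq using LeastI_ex[OF ex] .
  hence T1: "T = Suc (T - 1)" by auto
  define z where "z = g (T - 1)"
  define E where "E = Fnet m x (W (T - 1)) (-y)"
  define A where "A = Fnet m x (W (T - 1)) y"
  define \<eta>t where "\<eta>t = 2 * \<eta> * norm u ^ 2 / real m"
  define sg where "sg = 1 - z"
  have z_split: "z = A - E" unfolding z_def g_def A_def E_def Y_def using fnet_split[OF y_pm] by simp
  have zlt: "z < 1" using TP unfolding z_def by simp
  have osc': "\<And>t. \<bar>g t - 1\<bar> \<ge> \<delta>" using osc unfolding g_def x_def Y_def by blast
  have zd: "z \<le> 1 - \<delta>" using osc'[of "T-1"] zlt unfolding z_def by simp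
  have zTd: "1 + \<delta> \<le> g T" using osc'[of T] TP by simp
  have Eeq: "(1 / real m) * (\<Sum>r<m. act (- inner (W (T - 1) (-y) r) (- real_of_int y *\<^sub>R u))
                     + act (- inner (W (T - 1) (-y) r) (- real_of_int y *\<^sub>R v))) = E"
    unfolding E_def Fnet_def x_def Y_def by simp
  have E0: "E \<ge> 0" unfolding E_def by (rule Fnet_nonneg)
  have Esm: "E < \<delta>/2" using E_small unfolding Eeq .
  have un: "norm u > 0" using u_nz by simp
  have mp: "real m > 0" using m_pos by simp
  have h1: "1/2 \<le> \<eta>t" using eta_lo un mp unfolding \<eta>t_def by (simp add: field_simps)
  have h2: "\<eta>t \<le> 4/5" using eta_hi un mp unfolding \<eta>t_def by (simp add: field_simps)
  define \<eta>v where "\<eta>v = 2 * \<eta> * norm v ^ 2 / real m"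
  have "norm v * 100 < norm u" using v_small by simp
  hence "norm v \<le> norm u" using norm_ge_zero[of v] by linarith
  hence "norm v ^ 2 \<le> norm u ^ 2" by (intro power_mono) auto
  moreover have "\<eta> \<ge> 0"
  proof -
    have "real m / (4*norm u^2) \<ge> 0" by simp
    thus ?thesis using eta_lo by linarith
  qed
  ultimately have "2*\<eta>*norm v^2 \<le> 2*\<eta>*norm u^2" by (intro mult_left_mono) auto
  hence hv2: "\<eta>v \<le> \<eta>t" unfolding \<eta>v_def \<eta>t_def using mp by (intro divide_right_mono) auto
  have hv1: "0 \<le> \<eta>v" unfolding \<eta>v_def using \<open>\<eta> \<ge> 0\<close> by simp
  note hv = hv1 hv2
  have sgp: "sg > 0" unfolding sg_def using zlt by simp
  have kU: "0 \<le> \<eta>t * sg" "0 \<le> \<eta>v * sg" using h1 hv sgp by auto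
  have kle: "(1 + \<eta>v * sg)^2 \<le> (1 + \<eta>t * sg)^2"
    using hv sgp by (intro power_mono) (auto intro: mult_right_mono)
  define G where "G = fnet m x (W (T - 1))"
  have zG: "Y*G = z" unfolding G_def z_def g_def ..
  have step: "\<And>r. W T y r = W (T-1) y r - (\<eta> * Y / real m * (G - Y)) *\<^sub>R
      (act' (inner (W (T-1) y r) (Y *\<^sub>R u)) *\<^sub>R (Y *\<^sub>R u) + act' (inner (W (T-1) y r) (Y *\<^sub>R v)) *\<^sub>R (Y *\<^sub>R v))"
    using gd[rule_format, of "T-1"] unfolding T1[symmetric] by (simp add: gd_step_def G_def x_def Y_def)
  have iu: "\<And>r. inner (W T y r) (Y *\<^sub>R u) = inner (W (T-1) y r) (Y *\<^sub>R u) + (\<eta>t * sg) * max (inner (W (T-1) y r) (Y *\<^sub>R u)) 0"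
    unfolding step upd_inner[OF YY uv_orth] \<eta>t_def sg_def zG by simp
  have vu: "inner v u = 0" using uv_orth by (simp add: inner_commute)
  have iv: "\<And>r. inner (W T y r) (Y *\<^sub>R v) = inner (W (T-1) y r) (Y *\<^sub>R v) + (\<eta>v * sg) * max (inner (W (T-1) y r) (Y *\<^sub>R v)) 0"
    unfolding step add.commute[of "act' (inner _ (Y *\<^sub>R u)) *\<^sub>R (Y *\<^sub>R u)"] upd_inner[OF YY vu] \<eta>v_def sg_def zG by simp
  have FyT: "Fnet m x (W T) y \<le> (1 + \<eta>t * sg)^2 * A"
  proof -
    have "Fnet m x (W T) y = (1/real m) * (\<Sum>r<m. (1 + \<eta>t * sg)^2 * act (inner (W (T-1) y r) (Y *\<^sub>R u)) + (1 + \<eta>v * sg)^2 * act (inner (W (T-1) y r) (Y *\<^sub>R v)))"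
      unfolding Fnet_def x_def fst_conv snd_conv iu iv act_step[OF kU(1)] act_step[OF kU(2)] ..
    also have "\<dots> \<le> (1/real m) * (\<Sum>r<m. (1 + \<eta>t * sg)^2 * act (inner (W (T-1) y r) (Y *\<^sub>R u)) + (1 + \<eta>t * sg)^2 * act (inner (W (T-1) y r) (Y *\<^sub>R v)))"
      using mp kle by (intro mult_left_mono sum_mono add_left_mono mult_right_mono act_nonneg) auto
    also have "\<dots> = (1 + \<eta>t * sg)^2 * A"
      unfolding A_def Fnet_def x_def by (simp add: sum_distrib_left algebra_simps)
    finally show ?thesis .
  qed
  have gT: "g T \<le> (1 + \<eta>t * (1 - z))^2 * (z + E)"
  proof -
    have "g T = Fnet m x (W T) y - Fnet m x (W T) (-y)" unfolding g_def Y_def by (rule fnet_split[OF y_pm])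
    also have "\<dots> \<le> Fnet m x (W T) y" using Fnet_nonneg by simp
    also have "\<dots> \<le> (1 + \<eta>t * sg)^2 * A" by (rule FyT)
    finally show ?thesis using z_split unfolding sg_def by simp
  qed
  have q: "\<eta>t^2*z^2 - \<eta>t*(\<eta>t+2)*z + 1 \<le> 0"
    by (rule q_nonpos[OF h1 h2 E0 Esm _ sg_def sgp zTd]) (use zd gT sg_def in auto)
  have fin: "z \<ge> (2 + \<eta>t - sqrt (\<eta>t^2 + 4*\<eta>t)) / (2*\<eta>t) \<and> g T \<le> z*(1+\<eta>t*(1-z))^2 + 2*E"
    by (rule final_arith[OF h1 h2 E0 zlt gT q])
  have zz: "z = real_of_int y * fnet m (real_of_int y *\<^sub>R u, real_of_int y *\<^sub>R v) (W (T-1))"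
    unfolding z_def g_def x_def Y_def ..
  have gg: "g T = real_of_int y * fnet m (real_of_int y *\<^sub>R u, real_of_int y *\<^sub>R v) (W T)"
    unfolding g_def x_def Y_def ..
  show ?thesis
    unfolding Let_def Eeq \<eta>t_def[symmetric] zz[symmetric] gg[symmetric] using fin by assumption
qed

end
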